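(* Let $\mathcal{G}=(V,E)$ be an unweighted simple directed graph, let $i\in V$, and let $\phi$ be a spanning converging forest chosen uniformly at random from the set $\mathcal{F}$ of all spanning converging forests of $\mathcal{G}$. Then $$\overline{\omega}_{ii}(\phi)=\frac{1}{1+d_i}\Big(1+\sum_{k\in N^-_i}\widehat{\omega}_{ik}(\phi)\Big)$$ is an unbiased estimator of $\omega_{ii}$, its variance is $${\rm Var}(\overline{\omega}_{ii})=\frac{3\omega_{ii}}{1+d_i}-\frac{2}{(1+d_i)^2}-\omega_{ii}^2,$$ and this variance is always less than or equal to the variance of the estimator $\widehat{\omega}_{ii}(\phi)$.
   Context: $\mathcal{G}=(V,E)$ has $n$ nodes; $a_{ij}=1$ if $(i,j)\in E$ and $0$ otherwise. $d_i=\sum_j a_{ij}$ is the out-degree of $i$, $\mathbf{D}=\mathrm{diag}(d_1,\dots,d_n)$, $\mathbf{L}=\mathbf{D}-\mathbf{A}$, and the forest matrix is $\mathbf{\Omega}=(\mathbf{I}+\mathbf{L})^{-1}=(\omega_{ij})$. $N^-_i=\{k:(k,i)\in E\}$ is the set of in-neighbors of $i$. A rooted converging tree is a weakly connected digraph without cycles in which one node (the root) has out-degree $0$ and every other node has out-degree $1$ (an isolated node is such a tree rooted at itself). A spanning converging forest of $\mathcal{G}$ is a spanning subgraph (all of $V$, a subset of $E$) whose weakly connected components are rooted converging trees; $r_\phi(i)$ is the root of the tree of $\phi$ containing $i$. The basic estimator is $\widehat{\omega}_{ij}(\phi)=\mathbb{I}_{\{r_\phi(i)=j\}}$ (1 if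 $r_\phi(i)=j$, else 0). *)

theory Defs
  imports "HOL-Probability.Probability"
begin

definition adj_matrix :: "('n::finite \<times> 'n) set \<Rightarrow> real^'n^'n" where
  "adj_matrix E = (\<chi> i j. if (i, j) \<in> E then 1 else 0)"

definition out_deg :: "('n::finite \<times> 'n) set \<Rightarrow> 'n \<Rightarrow> nat" where
  "out_deg E i = card {j. (i, j) \<in> E}"

definition degree_matrix :: "('n::finite \<times> 'n) set \<Rightarrow> real^'n^'n" where
  "degree_matrix E = (\<chi> i j. if i = j then real (out_deg E i) else 0)"

definition laplacian :: "('n::finite \<times> 'n) set \<Rightarrow> real^'n^'n" where
  "laplacian E = degree_matrix E - adj_matrix E"

definition forest_matrix :: "('n::finite \<times> 'n) set \<Rightarrow> real^'n^'n" where
  "forest_matrix E = matrix_inv (mat 1 + laplacian E)"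

definition in_nbrs :: "('n \<times> 'n) set \<Rightarrow> 'n \<Rightarrow> 'n set" where
  "in_nbrs E i = {k. (k, i) \<in> E}"

definition rooted_converging_tree :: "'n set \<Rightarrow> ('n \<times> 'n) set \<Rightarrow> bool" where
  "rooted_converging_tree C T \<longleftrightarrow>
     T \<subseteq> C \<times> C \<and> C \<noteq> {} \<and>
     (\<forall>x\<in>C. \<forall>y\<in>C. (x, y) \<in> (T \<union> T\<inverse>)\<^sup>*) \<and>
     acyclic T \<and>
     (\<exists>r\<in>C. card {y. (r, y) \<in> T} = 0 \<and>
        (\<forall>x\<in>C - {r}. card {y. (x, y) \<in> T} = 1))"

definition weak_component :: "('n \<times> 'n) set \<Rightarrow> 'n \<Rightarrow> 'n set" where
  "weak_component F x = {y. (x, y) \<in> (F \<union> F\<inverse>)\<^sup>*}"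

definition spanning_converging_forest :: "('n::finite \<times> 'n) set \<Rightarrow> ('n \<times> 'n) set \<Rightarrow> bool" where
  "spanning_converging_forest E F \<longleftrightarrow>
     F \<subseteq> E \<and>
     (\<forall>x. rooted_converging_tree (weak_component F x)
            (F \<inter> (weak_component F x \<times> weak_component F x)))"

definition sc_forests :: "('n::finite \<times> 'n) set \<Rightarrow> ('n \<times> 'n) set set" where
  "sc_forests E = {F. spanning_converging_forest E F}"

definition forest_root :: "('n \<times> 'n) set \<Rightarrow> 'n \<Rightarrow> 'n" where
  "forest_root F i = (THE r. (i, r) \<in> F\<^sup>* \<and> (\<forall>y. (r, y) \<notin> F))"

definition omega_hat :: "('n \<times> 'n) set \<Rightarrow> 'n \<Rightarrow> 'n \<Rightarrow> real" where
  "omega_hat F i j = (if forest_root F i = j then 1 else 0)"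

definition omega_bar :: "('n::finite \<times> 'n) set \<Rightarrow> 'n \<Rightarrow> ('n \<times> 'n) set \<Rightarrow> real" where
  "omega_bar E i F = (1 + (\<Sum>k\<in>in_nbrs E i. omega_hat F i k)) / (1 + real (out_deg E i))"

end

theory Submission
  imports Defs
begin


definition func :: "('n \<times> 'n) set \<Rightarrow> bool" where
  "func F \<longleftrightarrow> (\<forall>x y z. (x,y) \<in> F \<longrightarrow> (x,z) \<in> F \<longrightarrow> y = z)"

definition isroot :: "('n \<times> 'n) set \<Rightarrow> 'n \<Rightarrow> bool" where
  "isroot F r \<longleftrightarrow> (\<forall>y. (r,y) \<notin> F)"

lemma func_rtrancl_linear:
  assumes "func F" "(x,a) \<in> F\<^sup>*" "(x,b) \<in> F\<^sup>*"
  shows "(a,b) \<in> F\<^sup>* \<or> (b,a) \<in> F\<^sup>*"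
  using assms(3,2)
proof (induction b rule: rtrancl_induct)
  case base
  then show ?case by auto
next
  case (step y z)
  from step.IH[OF step.prems] show ?case
  proof
    assume "(a,y) \<in> F\<^sup>*"
    then show ?thesis using step.hyps(2) by (meson rtrancl.rtrancl_into_rtrancl)
  next
    assume "(y,a) \<in> F\<^sup>*"
    then show ?thesis
    proof (cases rule: converse_rtranclE)
      case base then show ?thesis using step.hyps(2) by auto
    next
      case (step c)
      with \<open>(y,z) \<in> F\<close> \<open>func F\<close> have "c = z" unfolding func_def by blast
      with step show ?thesis by auto
    qed
  qed
qed

lemma root_unique:
  assumes "func F" "(x,a) \<in> F\<^sup>*" "(x,b) \<in> F\<^sup>*" "isroot F a" "isroot F b"
  shows "a = b"
  using func_rtrancl_linear[OF assms(1-3)] assms(4,5)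
  by (metis converse_rtranclE isroot_def)

lemma root_exists:
  fixes F :: "('n::finite \<times> 'n) set"
  assumes "acyclic F"
  shows "\<exists>r. (x,r) \<in> F\<^sup>* \<and> isroot F r"
proof -
  have wf: "wf (F\<inverse>)" by (rule finite_acyclic_wf_converse) (simp_all add: assms)
  have "x \<in> {y. (x,y) \<in> F\<^sup>*}" by simp
  from wf_eq_minimal[THEN iffD1, OF wf, rule_format, OF this]
  obtain r where r: "r \<in> {y. (x,y) \<in> F\<^sup>*}" "\<forall>z. (z,r) \<in> F\<inverse> \<longrightarrow> z \<notin> {y. (x,y) \<in> F\<^sup>*}"
    by blast
  then have "isroot F r" unfolding isroot_def
    by (meson converse_iff mem_Collect_eq rtrancl.rtrancl_into_rtrancl)
  with r show ?thesis by blast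
qed

lemma forest_root_prop:
  fixes F :: "('n::finite \<times> 'n) set"
  assumes "func F" "acyclic F"
  shows "(x, forest_root F x) \<in> F\<^sup>* \<and> isroot F (forest_root F x)"
proof -
  obtain r where r: "(x,r) \<in> F\<^sup>*" "isroot F r" using root_exists[OF assms(2)] by blast
  have "forest_root F x = r" unfolding forest_root_def
    apply (rule the_equality)
    using r root_unique[OF assms(1)] by (auto simp: isroot_def)
  with r show ?thesis by simp
qed

lemma forest_root_eq:
  fixes F :: "('n::finite \<times> 'n) set"
  assumes "func F" "acyclic F" "(x,r) \<in> F\<^sup>*" "isroot F r"
  shows "forest_root F x = r"
  using forest_root_prop[OF assms(1,2), of x] root_unique[OF assms(1)] assms(3,4) by blast

lemma forest_root_step:
  fixes F :: "('n::finite \<times> 'n) set"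
  assumes "func F" "acyclic F" "(x,y) \<in> F"
  shows "forest_root F x = forest_root F y"
  using forest_root_prop[OF assms(1,2), of y] assms
  by (meson converse_rtrancl_into_rtrancl forest_root_eq)

lemma forest_root_weak:
  fixes F :: "('n::finite \<times> 'n) set"
  assumes "func F" "acyclic F" "(x,y) \<in> (F \<union> F\<inverse>)\<^sup>*"
  shows "forest_root F x = forest_root F y"
  using assms(3)
proof (induction rule: rtrancl_induct)
  case base then show ?case by simp
next
  case (step y z)
  then show ?case using forest_root_step[OF assms(1,2)] by auto
qed



lemma weak_comp_closed:
  assumes "y \<in> weak_component F x" "(y,z) \<in> F"
  shows "z \<in> weak_component F x"
  using assms unfolding weak_component_def
  by (metis (no_types, lifting) Un_iff mem_Collect_eq rtrancl.rtrancl_into_rtrancl)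

lemma path_in_comp:
  assumes "(a,b) \<in> F\<^sup>*" "a \<in> weak_component F x"
  shows "(a,b) \<in> (F \<inter> (weak_component F x \<times> weak_component F x))\<^sup>*
         \<and> b \<in> weak_component F x"
  using assms(1)
proof (induction rule: rtrancl_induct)
  case base then show ?case using assms(2) by simp
next
  case (step y z)
  have yC: "y \<in> weak_component F x" using step.IH by blast
  have zC: "z \<in> weak_component F x" using weak_comp_closed[OF yC step.hyps(2)] .
  have "(y,z) \<in> F \<inter> (weak_component F x \<times> weak_component F x)" using yC zC step.hyps(2) by blast
  then show ?case using step.IH zC by (meson rtrancl.rtrancl_into_rtrancl)
qed

lemma tpath_in_comp:
  assumes "(a,b) \<in> F\<^sup>+" "a \<in> weak_component F x"
  shows "(a,b) \<in> (F \<inter> (weak_component F x \<times> weak_component F x))\<^sup>+"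
proof -
  obtain c where c: "(a,c) \<in> F" "(c,b) \<in> F\<^sup>*" using assms(1) by (meson tranclD)
  have cC: "c \<in> weak_component F x" using weak_comp_closed[OF assms(2) c(1)] .
  have "(c,b) \<in> (F \<inter> (weak_component F x \<times> weak_component F x))\<^sup>*"
    using path_in_comp[OF c(2) cC] by blast
  moreover have "(a,c) \<in> F \<inter> (weak_component F x \<times> weak_component F x)"
    using c(1) cC assms(2) by blast
  ultimately show ?thesis by (meson rtrancl_into_trancl2)
qed

lemma x_in_comp: "x \<in> weak_component F x"
  by (simp add: weak_component_def)

lemma scf_char:
  fixes E F :: "('n::finite \<times> 'n) set"
  shows "spanning_converging_forest E F \<longleftrightarrow> F \<subseteq> E \<and> func F \<and> acyclic F"
proof
  assume H: "spanning_converging_forest E F"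
  then have sub: "F \<subseteq> E" and T: "\<And>x. rooted_converging_tree (weak_component F x)
            (F \<inter> (weak_component F x \<times> weak_component F x))"
    unfolding spanning_converging_forest_def by auto
  have "func F" unfolding func_def
  proof (intro allI impI)
    fix x y z assume xy: "(x,y) \<in> F" and xz: "(x,z) \<in> F"
    define C where "C = weak_component F x"
    define TT where "TT = F \<inter> (C \<times> C)"
    have xC: "x \<in> C" unfolding C_def by (rule x_in_comp)
    have yC: "y \<in> C" "z \<in> C" unfolding C_def using weak_comp_closed x_in_comp xy xz by metis+
    from T[of x] obtain r where r: "r \<in> C" "card {y. (r,y) \<in> TT} = 0"
      "\<forall>x\<in>C - {r}. card {y. (x, y) \<in> TT} = 1"
      unfolding rooted_converging_tree_def C_def TT_def by blast
    have in1: "y \<in> {w. (x,w) \<in> TT}" "z \<in> {w. (x,w) \<in> TT}"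
      using xy xz xC yC unfolding TT_def by auto
    show "y = z"
    proof (cases "x = r")
      case True
      then show ?thesis using r(2) in1 by (simp add: card_eq_0_iff)
    next
      case False
      then have "card {w. (x,w) \<in> TT} = 1" using r(3) xC by blast
      then show ?thesis using in1 by (metis card_1_singletonE singletonD)
    qed
  qed
  moreover have "acyclic F" unfolding acyclic_def
  proof (intro allI notI)
    fix x assume "(x,x) \<in> F\<^sup>+"
    then have "(x,x) \<in> (F \<inter> (weak_component F x \<times> weak_component F x))\<^sup>+"
      using tpath_in_comp x_in_comp by metis
    moreover have "acyclic (F \<inter> (weak_component F x \<times> weak_component F x))"
      using T[of x] unfolding rooted_converging_tree_def by blast
    ultimately show False unfolding acyclic_def by blast
  qed
  ultimately show "F \<subseteq> E \<and> func F \<and> acyclic F" using sub by blast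
next
  assume H: "F \<subseteq> E \<and> func F \<and> acyclic F"
  then have fu: "func F" and ac: "acyclic F" by auto
  have RT: "rooted_converging_tree (weak_component F x)
            (F \<inter> (weak_component F x \<times> weak_component F x))" for x
  proof -
    define C where "C = weak_component F x"
    define TT where "TT = F \<inter> (C \<times> C)"
    define r where "r = forest_root F x"
    have xC: "x \<in> C" unfolding C_def by (rule x_in_comp)
    have rootC: "forest_root F a = r" if "a \<in> C" for a
    proof -
      have "(x,a) \<in> (F \<union> F\<inverse>)\<^sup>*" using that by (simp add: C_def weak_component_def)
      then show ?thesis using forest_root_weak[OF fu ac] by (simp add: r_def)
    qed
    have pathC: "\<And>a. a \<in> C \<Longrightarrow> (a, r) \<in> TT\<^sup>*"
      using rootC forest_root_prop[OF fu ac] path_in_comp unfolding C_def TT_def by metis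
    have rC: "r \<in> C"
      using forest_root_prop[OF fu ac, of x] path_in_comp xC unfolding C_def r_def by metis
    have conn: "\<forall>a\<in>C. \<forall>b\<in>C. (a,b) \<in> (TT \<union> TT\<inverse>)\<^sup>*"
    proof (intro ballI)
      fix a b assume "a \<in> C" "b \<in> C"
      have "(a,r) \<in> (TT \<union> TT\<inverse>)\<^sup>*" using pathC[OF \<open>a \<in> C\<close>]
        by (meson in_rtrancl_UnI)
      moreover have "(b,r) \<in> (TT \<union> TT\<inverse>)\<^sup>*" using pathC[OF \<open>b \<in> C\<close>]
        by (meson in_rtrancl_UnI)
      then have "(r,b) \<in> (TT \<union> TT\<inverse>)\<^sup>*"
        by (metis converse_Un converse_converse rtrancl_converseI sup_commute)
      ultimately show "(a,b) \<in> (TT \<union> TT\<inverse>)\<^sup>*" by (meson rtrancl_trans)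
    qed
    have rroot: "isroot F r" using forest_root_prop[OF fu ac] unfolding r_def by blast
    have card0: "card {y. (r,y) \<in> TT} = 0" using rroot unfolding TT_def isroot_def by auto
    have card1: "\<forall>a\<in>C - {r}. card {y. (a, y) \<in> TT} = 1"
    proof
      fix a assume a: "a \<in> C - {r}"
      have "\<not> isroot F a"
      proof
        assume "isroot F a"
        then have "forest_root F a = a" using forest_root_eq[OF fu ac] by blast
        with rootC a show False by auto
      qed
      then obtain y where y: "(a,y) \<in> F" unfolding isroot_def by blast
      have yC: "y \<in> C" using weak_comp_closed[of a F x y] a y by (simp add: C_def)
      have "{w. (a,w) \<in> TT} = {y}"
      proof (rule set_eqI, rule iffI)
        fix w assume "w \<in> {w. (a,w) \<in> TT}"
        then have "(a,w) \<in> F" by (simp add: TT_def)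
        then show "w \<in> {y}" using fu y unfolding func_def by blast
      next
        fix w assume "w \<in> {y}"
        then show "w \<in> {w. (a,w) \<in> TT}" using y yC a by (simp add: TT_def)
      qed
      then show "card {w. (a, w) \<in> TT} = 1" by simp
    qed
    have ac2: "acyclic TT" unfolding TT_def by (rule acyclic_subset[OF ac]) auto
    have sub2: "TT \<subseteq> C \<times> C" by (simp add: TT_def)
    have ne: "C \<noteq> {}" using xC by blast
    have "rooted_converging_tree C TT"
      unfolding rooted_converging_tree_def
      apply (intro conjI)
          apply (fact sub2)
         apply (fact ne)
        apply (fact conn)
       apply (fact ac2)
      using rC card0 card1 by blast
    then show ?thesis by (simp add: C_def TT_def)
  qed
  show "spanning_converging_forest E F"
    unfolding spanning_converging_forest_def
  proof (intro conjI allI)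
    show "F \<subseteq> E" using H by simp
  next
    fix x show "rooted_converging_tree (weak_component F x)
            (F \<inter> (weak_component F x \<times> weak_component F x))" by (rule RT)
  qed
qed



definition FS :: "('n::finite \<times> 'n) set \<Rightarrow> ('n \<times> 'n) set set" where
  "FS E = {F. F \<subseteq> E \<and> func F \<and> acyclic F}"

lemma sc_forests_FS: "sc_forests E = FS E"
  unfolding sc_forests_def FS_def using scf_char by blast

definition S0 :: "('n::finite \<times> 'n) set \<Rightarrow> 'n \<Rightarrow> ('n \<times> 'n) set set" where
  "S0 E i = {F \<in> FS E. isroot F i}"

definition KK :: "('n::finite \<times> 'n) set \<Rightarrow> 'n \<Rightarrow> ('n \<times> 'n) set \<Rightarrow> 'n set" where
  "KK E i F = {k. (i,k) \<in> E \<and> forest_root F k \<noteq> i}"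

lemma insert_in_FS:
  assumes "F \<in> S0 E i" "k \<in> KK E i F"
  shows "insert (i,k) F \<in> FS E"
proof -
  have F: "F \<subseteq> E" "func F" "acyclic F" "isroot F i" using assms(1) by (auto simp: S0_def FS_def)
  have k: "(i,k) \<in> E" "forest_root F k \<noteq> i" using assms(2) by (auto simp: KK_def)
  have "(k,i) \<notin> F\<^sup>*"
  proof
    assume "(k,i) \<in> F\<^sup>*"
    then have "forest_root F k = i" using forest_root_eq[OF F(2,3) _ F(4)] by blast
    with k show False by simp
  qed
  then have "acyclic (insert (i,k) F)" using F(3) by simp
  moreover have "func (insert (i,k) F)" using F(2,4) unfolding func_def isroot_def by blast
  moreover have "insert (i,k) F \<subseteq> E" using F(1) k(1) by blast
  ultimately show ?thesis by (simp add: FS_def)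
qed

lemma FS_decomp:
  "FS E = S0 E i \<union> (\<lambda>(F,k). insert (i,k) F) ` (SIGMA F:S0 E i. KK E i F)"
proof (rule set_eqI, rule iffI)
  fix G assume G: "G \<in> FS E"
  then have Gp: "G \<subseteq> E" "func G" "acyclic G" by (auto simp: FS_def)
  show "G \<in> S0 E i \<union> (\<lambda>(F,k). insert (i,k) F) ` (SIGMA F:S0 E i. KK E i F)"
  proof (cases "isroot G i")
    case True
    then show ?thesis using G by (simp add: S0_def)
  next
    case False
    then obtain k where ik: "(i,k) \<in> G" unfolding isroot_def by blast
    define F where "F = G - {(i,k)}"
    have GF: "G = insert (i,k) F" using ik by (auto simp: F_def)
    have Fp: "F \<subseteq> E" "func F" "acyclic F" using Gp unfolding F_def func_def
      by (auto intro: acyclic_subset)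
    have Fr: "isroot F i" using Gp(2) ik unfolding isroot_def F_def func_def by blast
    have "forest_root F k \<noteq> i"
    proof
      assume "forest_root F k = i"
      then have "(k,i) \<in> F\<^sup>*" using forest_root_prop[OF Fp(2,3), of k] by simp
      then have "(i,k) \<notin> F \<and> acyclic (insert (i,k) F)" using Gp(3) GF by simp
      with \<open>(k,i) \<in> F\<^sup>*\<close> show False by simp
    qed
    then have "k \<in> KK E i F" using ik Gp(1) by (auto simp: KK_def)
    moreover have "F \<in> S0 E i" using Fp Fr by (simp add: S0_def FS_def)
    ultimately show ?thesis using GF by blast
  qed
next
  fix G assume "G \<in> S0 E i \<union> (\<lambda>(F,k). insert (i,k) F) ` (SIGMA F:S0 E i. KK E i F)"
  then show "G \<in> FS E"
    using insert_in_FS by (auto simp: S0_def)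
qed

lemma sum_decomp:
  fixes f :: "('n::finite \<times> 'n) set \<Rightarrow> real"
  shows "(\<Sum>G\<in>FS E. f G) = (\<Sum>F\<in>S0 E i. f F + (\<Sum>k\<in>KK E i F. f (insert (i,k) F)))"
proof -
  let ?I = "(\<lambda>(F,k). insert (i,k) F) ` (SIGMA F:S0 E i. KK E i F)"
  have disj: "S0 E i \<inter> ?I = {}"
    by (auto simp: S0_def isroot_def)
  have inj: "inj_on (\<lambda>(F,k). insert (i,k) F) (SIGMA F:S0 E i. KK E i F)"
  proof (rule inj_onI, clarify)
    fix F k F' k'
    assume a: "F \<in> S0 E i" "k \<in> KK E i F" "F' \<in> S0 E i" "k' \<in> KK E i F'"
       "insert (i,k) F = insert (i,k') F'"
    have r: "isroot F i" "isroot F' i" using a by (auto simp: S0_def)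
    have "k = k'" using a(5) r unfolding isroot_def by blast
    moreover have "F = F'"
    proof -
      have "F = insert (i,k) F - {(i,k)}" using r(1) unfolding isroot_def by blast
      also have "\<dots> = insert (i,k') F' - {(i,k')}" using a(5) \<open>k = k'\<close> by simp
      also have "\<dots> = F'" using r(2) unfolding isroot_def by blast
      finally show ?thesis .
    qed
    ultimately show "F = F' \<and> k = k'" by simp
  qed
  have "(\<Sum>G\<in>FS E. f G) = (\<Sum>G\<in>S0 E i. f G) + (\<Sum>G\<in>?I. f G)"
    by (subst FS_decomp[of E i], rule sum.union_disjoint) (simp_all add: disj)
  also have "(\<Sum>G\<in>?I. f G) = (\<Sum>(F,k)\<in>(SIGMA F:S0 E i. KK E i F). f (insert (i,k) F))"
    by (subst sum.reindex[OF inj]) (simp add: case_prod_unfold)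
  also have "\<dots> = (\<Sum>F\<in>S0 E i. \<Sum>k\<in>KK E i F. f (insert (i,k) F))"
    by (subst sum.Sigma) simp_all
  finally show ?thesis by (simp add: sum.distrib)
qed

lemma root_insert:
  assumes "F \<in> S0 E i" "k \<in> KK E i F"
  shows "forest_root (insert (i,k) F) x =
           (if forest_root F x = i then forest_root F k else forest_root F x)"
proof -
  let ?G = "insert (i,k) F"
  have F: "func F" "acyclic F" "isroot F i" using assms(1) by (auto simp: S0_def FS_def)
  have G: "func ?G" "acyclic ?G" using insert_in_FS[OF assms] by (auto simp: FS_def)
  have k: "forest_root F k \<noteq> i" using assms(2) by (auto simp: KK_def)
  have sub: "F\<^sup>* \<subseteq> ?G\<^sup>*" by (rule rtrancl_mono) blast
  have rootG: "isroot ?G r" if "isroot F r" "r \<noteq> i" for r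
    using that unfolding isroot_def by blast
  show ?thesis
  proof (cases "forest_root F x = i")
    case True
    have "(x,i) \<in> ?G\<^sup>*" using forest_root_prop[OF F(1,2), of x] True sub by auto
    moreover have "(k, forest_root F k) \<in> ?G\<^sup>*" using forest_root_prop[OF F(1,2), of k] sub by auto
    ultimately have "(x, forest_root F k) \<in> ?G\<^sup>*"
      by (meson insertI1 rtrancl_into_rtrancl rtrancl_trans)
    moreover have "isroot ?G (forest_root F k)"
      using rootG forest_root_prop[OF F(1,2), of k] k by blast
    ultimately show ?thesis using forest_root_eq[OF G] True by simp
  next
    case False
    have "(x, forest_root F x) \<in> ?G\<^sup>*" using forest_root_prop[OF F(1,2), of x] sub by auto
    moreover have "isroot ?G (forest_root F x)"
      using rootG forest_root_prop[OF F(1,2), of x] False by blast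
    ultimately show ?thesis using forest_root_eq[OF G] False by simp
  qed
qed

lemma root_S0: "F \<in> S0 E i \<Longrightarrow> forest_root F i = i"
  using forest_root_eq[of F i i] by (auto simp: S0_def FS_def)



lemma perF:
  fixes \<rho> :: "'n \<Rightarrow> 'n" and Os :: "'n set" and i j :: 'n
  assumes fin: "finite Os"
  defines "K \<equiv> {k\<in>Os. \<rho> k \<noteq> i}"
  shows "(1 + real (card Os)) * (of_bool (i = j) + (\<Sum>k\<in>K. of_bool (\<rho> k = j)))
       = of_bool (i = j) * (1 + real (card K))
         + (\<Sum>m\<in>Os. of_bool (\<rho> m = j) + (\<Sum>k\<in>K. of_bool ((if \<rho> m = i then \<rho> k else \<rho> m) = j)))"
proof -
  define B where "B = {k\<in>Os. \<rho> k = i}"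
  define a where "a = (\<Sum>k\<in>K. of_bool (\<rho> k = j) :: real)"
  have OBK: "Os = B \<union> K" "B \<inter> K = {}" by (auto simp: B_def K_def)
  have finB: "finite B" "finite K" using fin by (auto simp: B_def K_def)
  have cO: "card Os = card B + card K" using OBK finB by (simp add: card_Un_disjoint)
  have split: "(\<Sum>m\<in>Os. g m) = (\<Sum>m\<in>B. g m) + (\<Sum>m\<in>K. g m)" for g :: "'n \<Rightarrow> real"
    using OBK finB by (simp add: sum.union_disjoint)
  have s1: "(\<Sum>m\<in>Os. of_bool (\<rho> m = j) :: real) = card B * of_bool (i = j) + a"
    unfolding split a_def by (simp add: B_def)
  have s2B: "(\<Sum>m\<in>B. (\<Sum>k\<in>K. of_bool ((if \<rho> m = i then \<rho> k else \<rho> m) = j)) :: real) = card B * a"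
    by (simp add: B_def a_def)
  have s2K: "(\<Sum>m\<in>K. (\<Sum>k\<in>K. of_bool ((if \<rho> m = i then \<rho> k else \<rho> m) = j)) :: real)
      = (\<Sum>m\<in>K. real (card K) * of_bool (\<rho> m = j))"
    by (rule sum.cong) (auto simp: K_def)
  also have "\<dots> = card K * a" by (simp add: a_def sum_distrib_left)
  finally have s2K': "(\<Sum>m\<in>K. (\<Sum>k\<in>K. of_bool ((if \<rho> m = i then \<rho> k else \<rho> m) = j)) :: real) = card K * a" .
  have "(\<Sum>m\<in>Os. of_bool (\<rho> m = j) + (\<Sum>k\<in>K. of_bool ((if \<rho> m = i then \<rho> k else \<rho> m) = j)) :: real)
      = card B * of_bool (i = j) + a + card B * a + card K * a"
    unfolding sum.distrib s1 using split s2B s2K' by simp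
  then show ?thesis unfolding a_def[symmetric] cO by (simp add: algebra_simps)
qed

definition NN :: "('n::finite \<times> 'n) set \<Rightarrow> 'n \<Rightarrow> 'n \<Rightarrow> real" where
  "NN E x j = (\<Sum>G\<in>FS E. of_bool (forest_root G x = j))"

lemma KK_eq: "KK E i F = {k\<in>{k. (i,k) \<in> E}. forest_root F k \<noteq> i}"
  by (auto simp: KK_def)

lemma col_identity:
  fixes E :: "('n::finite \<times> 'n) set"
  shows "(1 + real (out_deg E i)) * NN E i j
       = of_bool (i = j) * real (card (FS E)) + (\<Sum>m\<in>{k. (i,k) \<in> E}. NN E m j)"
proof -
  let ?O = "{k. (i,k) \<in> E}"
  have cardFS: "real (card (FS E)) = (\<Sum>G\<in>FS E. 1)" by simp
  have L: "NN E i j = (\<Sum>F\<in>S0 E i. of_bool (i = j) + (\<Sum>k\<in>KK E i F. of_bool (forest_root F k = j)))"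
    unfolding NN_def
    by (subst sum_decomp[of _ E i]) (rule sum.cong, simp_all add: root_insert root_S0)
  have C: "real (card (FS E)) = (\<Sum>F\<in>S0 E i. 1 + real (card (KK E i F)))"
    unfolding cardFS by (subst sum_decomp[of _ E i]) simp
  have R: "NN E m j = (\<Sum>F\<in>S0 E i. of_bool (forest_root F m = j) +
       (\<Sum>k\<in>KK E i F. of_bool ((if forest_root F m = i then forest_root F k else forest_root F m) = j)))"
    for m
    unfolding NN_def
    by (subst sum_decomp[of _ E i]) (rule sum.cong, simp_all add: root_insert)
  have "(\<Sum>m\<in>?O. NN E m j) = (\<Sum>F\<in>S0 E i. \<Sum>m\<in>?O. of_bool (forest_root F m = j) +
       (\<Sum>k\<in>KK E i F. of_bool ((if forest_root F m = i then forest_root F k else forest_root F m) = j)))"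
    unfolding R by (rule sum.swap)
  then have "of_bool (i = j) * real (card (FS E)) + (\<Sum>m\<in>?O. NN E m j)
     = (\<Sum>F\<in>S0 E i. of_bool (i = j) * (1 + real (card (KK E i F))) + (\<Sum>m\<in>?O. of_bool (forest_root F m = j) +
       (\<Sum>k\<in>KK E i F. of_bool ((if forest_root F m = i then forest_root F k else forest_root F m) = j))))"
    unfolding C by (simp add: sum.distrib sum_distrib_left)
  also have "\<dots> = (\<Sum>F\<in>S0 E i. (1 + real (card ?O)) * (of_bool (i = j) + (\<Sum>k\<in>KK E i F. of_bool (forest_root F k = j))))"
    by (rule sum.cong[OF refl], unfold KK_eq, rule perF[symmetric]) simp
  also have "\<dots> = (1 + real (out_deg E i)) * NN E i j"
    unfolding L out_deg_def by (simp add: sum_distrib_left)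
  finally show ?thesis by simp
qed



lemma FS_ne: "{} \<in> FS E" by (simp add: FS_def func_def acyclic_def)

lemma FS_card_pos: "card (FS (E::('n::finite \<times> 'n) set)) > 0"
  using FS_ne by (metis card_gt_0_iff empty_iff finite)

lemma sum_split_aux: fixes g :: "'n::finite \<Rightarrow> real"
  shows "(\<Sum>k\<in>UNIV. ((if i = k then c else 0) - (if P k then 1 else 0)) * g k) = c * g i - (\<Sum>k\<in>{k. P k}. g k)"
proof -
  have "(\<Sum>k\<in>UNIV. ((if i = k then c else 0) - (if P k then 1 else 0)) * g k)
     = (\<Sum>k\<in>UNIV. (if i = k then c * g k else 0)) - (\<Sum>k\<in>UNIV. if P k then g k else 0)"
  proof -
    have "\<And>k. ((if i = k then c else 0) - (if P k then 1 else 0)) * g k = (if i = k then c * g k else 0) - (if P k then g k else 0)"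
      by (simp add: algebra_simps)
    then show ?thesis by (simp only: sum_subtractf)
  qed
  also have "\<dots> = c * g i - (\<Sum>k\<in>{k. P k}. g k)"
    by (simp add: sum.inter_filter[symmetric])
  finally show ?thesis .
qed
lemma sum_split_aux2: fixes g :: "'n::finite \<Rightarrow> real"
  shows "(\<Sum>k\<in>UNIV. g k * ((if k = i then c else 0) - (if P k then 1 else 0))) = g i * c - (\<Sum>k\<in>{k. P k}. g k)"
  using sum_split_aux[of i c P g] by (simp add: mult.commute eq_commute[of i])

definition PM :: "('n::finite \<times> 'n) set \<Rightarrow> real^'n^'n" where
  "PM E = (\<chi> x j. NN E x j / real (card (FS E)))"

lemma M_entry: "(mat 1 + laplacian E) $ a $ b
   = (if a = b then 1 + real (out_deg E a) else 0) - (if (a,b) \<in> E then 1 else 0)"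
  by (simp add: laplacian_def degree_matrix_def adj_matrix_def mat_def)

lemma M_entry2: "mat 1 $ a $ b + laplacian E $ a $ b
   = (if a = b then 1 + real (out_deg E a) else 0) - (if (a,b) \<in> E then 1 else 0)"
  using M_entry[of E a b] by simp

lemma MP: fixes E :: "('n::finite \<times> 'n) set"
  assumes simple: "\<forall>v. (v, v) \<notin> E"
  shows "(mat 1 + laplacian E) ** PM E = mat 1"
proof -
  have N: "real (card (FS E)) > 0" using FS_card_pos by simp
  have "((mat 1 + laplacian E) ** PM E) $ i $ j = (if i = j then 1 else 0)" for i j
  proof -
    have "((mat 1 + laplacian E) ** PM E) $ i $ j
       = (\<Sum>k\<in>UNIV. (mat 1 + laplacian E) $ i $ k * PM E $ k $ j)"
      by (simp add: matrix_matrix_mult_def)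
    also have "\<dots> = (\<Sum>k\<in>UNIV. ((if i = k then 1 + real (out_deg E i) else 0) - (if (i,k) \<in> E then 1 else 0)) * (NN E k j / real (card (FS E))))"
      by (simp only: M_entry PM_def vec_lambda_beta)
    also have "\<dots> = (1 + real (out_deg E i)) * (NN E i j / real (card (FS E)))
        - (\<Sum>k\<in>{k. (i,k) \<in> E}. NN E k j / real (card (FS E)))"
      by (rule sum_split_aux)
    also have "\<dots> = ((1 + real (out_deg E i)) * NN E i j - (\<Sum>k\<in>{k. (i,k) \<in> E}. NN E k j)) / real (card (FS E))"
      by (simp add: sum_divide_distrib diff_divide_distrib)
    also have "\<dots> = of_bool (i = j)"
      using col_identity[of E i j] N FS_ne[of E] by (cases "FS E = {}") auto
    finally show ?thesis by simp
  qed
  then show ?thesis by (simp add: vec_eq_iff mat_def)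
qed

lemma forest_matrix_PM: fixes E :: "('n::finite \<times> 'n) set"
  assumes simple: "\<forall>v. (v, v) \<notin> E"
  shows "forest_matrix E = PM E"
proof -
  let ?M = "mat 1 + laplacian E"
  have 1: "?M ** PM E = mat 1" by (rule MP[OF simple])
  have 2: "PM E ** ?M = mat 1" using 1 matrix_left_right_inverse by blast
  have "\<exists>A'. ?M ** A' = mat 1 \<and> A' ** ?M = mat 1" using 1 2 by blast
  then have Q: "?M ** matrix_inv ?M = mat 1 \<and> matrix_inv ?M ** ?M = mat 1"
    unfolding matrix_inv_def by (rule someI_ex)
  have "matrix_inv ?M = matrix_inv ?M ** (?M ** PM E)" using 1 by (simp add: matrix_mul_rid)
  also have "\<dots> = (matrix_inv ?M ** ?M) ** PM E" by (simp add: matrix_mul_assoc)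
  also have "\<dots> = PM E" using Q by (simp add: matrix_mul_lid)
  finally show ?thesis by (simp add: forest_matrix_def)
qed

lemma row_identity: fixes E :: "('n::finite \<times> 'n) set"
  assumes simple: "\<forall>v. (v, v) \<notin> E"
  shows "PM E $ i $ i * (1 + real (out_deg E i)) - (\<Sum>k\<in>in_nbrs E i. PM E $ i $ k) = 1"
proof -
  let ?M = "mat 1 + laplacian E"
  have 2: "PM E ** ?M = mat 1" using MP[OF simple] matrix_left_right_inverse by blast
  then have "(PM E ** ?M) $ i $ i = 1" by (simp add: mat_def)
  moreover have "(PM E ** ?M) $ i $ i = (\<Sum>k\<in>UNIV. PM E $ i $ k * ?M $ k $ i)"
    by (simp add: matrix_matrix_mult_def)
  moreover have "\<dots> = (\<Sum>k\<in>UNIV. PM E $ i $ k * ((if k = i then 1 + real (out_deg E i) else 0) - (if (k,i) \<in> E then 1 else 0)))"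
    by (rule sum.cong, rule refl, simp only: M_entry, simp)
  moreover have "\<dots> = PM E $ i $ i * (1 + real (out_deg E i)) - (\<Sum>k\<in>in_nbrs E i. PM E $ i $ k)"
    unfolding in_nbrs_def by (rule sum_split_aux2)
  ultimately show ?thesis by simp
qed



theorem lemma4p3:
  fixes E :: "('n::finite \<times> 'n) set" and i :: 'n
  assumes simple: "\<forall>v. (v, v) \<notin> E"
  shows "measure_pmf.expectation (pmf_of_set (sc_forests E)) (omega_bar E i)
           = forest_matrix E $ i $ i \<and>
         measure_pmf.variance (pmf_of_set (sc_forests E)) (omega_bar E i)
           = 3 * forest_matrix E $ i $ i / (1 + real (out_deg E i))
             - 2 / (1 + real (out_deg E i))^2 - (forest_matrix E $ i $ i)^2 \<and>
         measure_pmf.variance (pmf_of_set (sc_forests E)) (omega_bar E i)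
           \<le> measure_pmf.variance (pmf_of_set (sc_forests E)) (\<lambda>F. omega_hat F i i)"
proof -
  define S where "S = sc_forests E"
  have SF: "S = FS E" by (simp add: S_def sc_forests_FS)
  have fin: "finite S" by simp
  have ne: "S \<noteq> {}" using FS_ne[of E] SF by auto
  define p where "p = pmf_of_set S"
  define N where "N = real (card S)"
  have Npos: "N > 0" using FS_card_pos[of E] SF N_def by simp
  have ex: "measure_pmf.expectation p f = sum f S / N" for f :: "_ \<Rightarrow> real"
    unfolding p_def N_def by (rule integral_pmf_of_set[OF ne fin])
  have int: "integrable (measure_pmf p) f" for f :: "_ \<Rightarrow> real"
    by (rule integrable_measure_pmf_finite) (simp add: p_def set_pmf_of_set[OF ne fin])
  have var: "measure_pmf.variance p f = measure_pmf.expectation p (\<lambda>x. (f x)^2) - (measure_pmf.expectation p f)^2"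
    for f :: "_ \<Rightarrow> real"
    by (rule measure_pmf.variance_eq) (rule int)+
  define t where "t = 1 + real (out_deg E i)"
  have t1: "t \<ge> 1" by (simp add: t_def)
  define w where "w = forest_matrix E $ i $ i"
  have wP: "w = PM E $ i $ i" by (simp add: w_def forest_matrix_PM[OF simple])
  define X where "X G = (\<Sum>k\<in>in_nbrs E i. omega_hat G i k)" for G
  have X01: "X G = (if forest_root G i \<in> in_nbrs E i then 1 else 0)" for G
    by (simp add: X_def omega_hat_def sum.delta')
  define x where "x = sum X S / N"
  have sumX: "sum X S = (\<Sum>k\<in>in_nbrs E i. NN E i k)"
    unfolding X_def NN_def SF omega_hat_def by (subst sum.swap) (simp add: of_bool_def)
  have xP: "x = (\<Sum>k\<in>in_nbrs E i. PM E $ i $ k)"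
    unfolding x_def sumX by (simp add: PM_def N_def SF sum_divide_distrib)
  have row: "w * t - x = 1" using row_identity[OF simple, of i] wP xP t_def by simp
  have sumX_le: "sum X S \<le> N"
  proof -
    have "sum X S \<le> sum (\<lambda>_. 1) S" by (rule sum_mono) (simp add: X01)
    then show ?thesis by (simp add: N_def)
  qed
  have sumX_ge: "sum X S \<ge> 0" by (rule sum_nonneg) (simp add: X01)
  have x01: "0 \<le> x" "x \<le> 1" using sumX_le sumX_ge Npos by (auto simp: x_def field_simps)
  have NNii: "NN E i i = (\<Sum>G\<in>S. omega_hat G i i)" by (simp add: NN_def SF omega_hat_def of_bool_def)
  have w_ex: "w = (\<Sum>G\<in>S. omega_hat G i i) / N" by (simp add: wP PM_def NNii N_def SF)
  have w_le: "w \<le> 1"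
  proof -
    have "(\<Sum>G\<in>S. omega_hat G i i) \<le> sum (\<lambda>_. 1) S" by (rule sum_mono) (simp add: omega_hat_def)
    then show ?thesis using Npos by (simp add: w_ex N_def field_simps)
  qed
  have bar: "omega_bar E i G = (1 + X G) / t" for G by (simp add: omega_bar_def X_def t_def)
  have E1: "measure_pmf.expectation p (omega_bar E i) = (1 + x) / t"
  proof -
    have "sum (omega_bar E i) S = (\<Sum>G\<in>S. 1 + X G) / t" by (simp add: bar sum_divide_distrib)
    also have "\<dots> = (N + sum X S) / t" by (simp add: sum.distrib N_def)
    finally show ?thesis using Npos t1 by (simp add: ex x_def field_simps)
  qed
  have E2: "measure_pmf.expectation p (\<lambda>G. (omega_bar E i G)^2) = (1 + 3 * x) / t^2"
  proof -
    have sq: "(omega_bar E i G)^2 = (1 + 3 * X G) / t^2" for G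
      by (simp add: bar X01 power_divide)
    have "(\<Sum>G\<in>S. (omega_bar E i G)^2) = (\<Sum>G\<in>S. 1 + 3 * X G) / t^2" by (simp add: sq sum_divide_distrib)
    also have "\<dots> = (N + 3 * sum X S) / t^2" by (simp add: sum.distrib N_def sum_distrib_left)
    finally show ?thesis using Npos t1 by (simp add: ex x_def field_simps)
  qed
  have H1: "measure_pmf.expectation p (\<lambda>F. omega_hat F i i) = w" by (simp add: ex w_ex)
  have H2: "measure_pmf.expectation p (\<lambda>F. (omega_hat F i i)^2) = w"
  proof -
    have "(\<lambda>F. (omega_hat F i i)^2) = (\<lambda>F. omega_hat F i i)" by (rule ext) (simp add: omega_hat_def)
    then show ?thesis using H1 by simp
  qed
  have goal1: "measure_pmf.expectation p (omega_bar E i) = w"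
  proof -
    have "(1 + x) / t = w" using row t1 by (simp add: field_simps)
    then show ?thesis using E1 by simp
  qed
  have xw: "x = w * t - 1" using row by simp
  have VB: "measure_pmf.variance p (omega_bar E i) = (1 + 3 * x) / t^2 - w^2"
    using var[of "omega_bar E i"] E2 goal1 by simp
  have VH: "measure_pmf.variance p (\<lambda>F. omega_hat F i i) = w - w^2"
    using var[of "\<lambda>F. omega_hat F i i"] H1 H2 by simp
  have goal2: "measure_pmf.variance p (omega_bar E i) = 3 * w / t - 2 / t^2 - w^2"
  proof -
    have "(1 + 3 * x) / t^2 = 3 * w / t - 2 / t^2"
      using t1 by (simp add: xw field_simps power2_eq_square)
    then show ?thesis using VB by simp
  qed
  have key: "1 + 3 * x \<le> (1 + x) * t"
  proof -
    have "w * t \<le> 1 * t" by (rule mult_right_mono[OF w_le]) (use t1 in simp)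
    then have tw: "(1 + x) \<le> t" using xw by simp
    consider "out_deg E i = 0" | "out_deg E i = 1" | "out_deg E i \<ge> 2" by linarith
    then show ?thesis
    proof cases
      case 1 then have "t = 1" by (simp add: t_def)
      then show ?thesis using tw x01 by simp
    next
      case 2 then have "t = 2" by (simp add: t_def)
      then show ?thesis using x01 by simp
    next
      case 3 then have "t \<ge> 3" by (simp add: t_def)
      have "(1 + x) * 3 \<le> (1 + x) * t" by (rule mult_left_mono) (use x01 \<open>t \<ge> 3\<close> in simp_all)
      then show ?thesis using x01 by simp
    qed
  qed
  have goal3: "measure_pmf.variance p (omega_bar E i) \<le> measure_pmf.variance p (\<lambda>F. omega_hat F i i)"
  proof -
    note VH VB
    moreover have "(1 + 3 * x) / t^2 \<le> w"
    proof -
      have "w = (1 + x) * t / t^2" using xw t1 by (simp add: power2_eq_square field_simps)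
      then show ?thesis using key t1 by (simp add: divide_right_mono)
    qed
    ultimately show ?thesis by simp
  qed
  show ?thesis
    using goal1 goal2 goal3 unfolding p_def S_def w_def t_def by simp
qed

end
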